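(* Let $G$ be a finite graph with vertex set $V$ and edge set $E$, and fix enumerations of its vertices and edges as described in the context (with associated circuits $S_G,T_G$ and $\mathtt{MATCH}_{X^V}$). Then there is a pseudofunctor $\mathcal{F}(G)\to\mathbf{Bkp}$ sending each object of $\mathcal{F}(G)$ to $X^V$ and each generating morphism (edge) $e$ of $\mathcal{F}(G)$ to the morphism $$(\mathrm{id}_{X^V}\otimes e);(\mathrm{id}_{X^V}\otimes \mathtt{COPY}_{X^E});(\mathrm{id}_{X^V}\otimes S_G\otimes T_G);(\mathtt{MATCH}_{X^V}\otimes \mathrm{id}_{X^V}),$$ where $e$ here denotes the constant circuit $X^0\to X^E$ outputting the enumeration of the edge $e$. (The image of $\mathcal{F}(G)$ under this pseudofunctor is called $\mathbf{Bpath}(G)$.)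
   Context: Boolean circuits: fix a functionally complete set of gates containing $\mathtt{NAND}$ (2 inputs, 1 output), $\mathtt{COPY}$ (1 input, 2 outputs, duplicating its input), and constants $\top,\bot$ (0 inputs, 1 output). $\mathbf{Bcirc}$ is the free symmetric strict monoidal category generated by one object $X$ and one morphism $X^n\to X^m$ per gate with $n$ inputs and $m$ outputs; $X^n$ is the $n$-fold monoidal product, $X^0$ the unit. $\mathtt{ext}:\mathbf{Bcirc}\to\mathbf{Bfun}$ is the strict monoidal functor to the category of boolean functions $\{0,1\}^n\to\{0,1\}^m$ sending each gate to the function it computes. $\mathtt{AND}$ denotes a fixed circuit $X\otimes X\to X$ computing conjunction, $\mathtt{COPY}_{X^k}:X^k\to X^k\otimes X^k$ a circuit duplicating $k$ wires, and composition is written diagrammatically ($f;g$ means first $f$ then $g$). The bicategory $\mathbf{Bkp}$: objects are those of $\mathbf{Bcirc}$; 1-cells $A\to B$ are morphisms $A\otimes X^n\to X\otimes B$ of $\mathbf{Bcirc}$ for any $n\in\mathbb{N}$; the identity on $A$ is $\top\otimes\mathrm{id}_A: A\otimes X^0\to X\otimes A$; for $f:A\otimes X^{n_0}\to X\otimes B$ and $g:B\otimes X^{n_1}\to X\otimes C$, the composite $f;g$ is $(f\otimes \mathrm{id}_{X^{n_1}});(\mathrm{id}_X\otimes g);(\mathtt{AND}\otimes\mathrm{id}_C)$; between 1-cells $f,g:A\to B$ there is exactly one 2-cell if $\mathtt{ext}f=\mathtt{ext}g$ and none otherwise, with the evident trivial 2-cell compositions and identities. Enumerations: let $X^V$ denote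 $X^{\lceil\log_2(|V|+1)\rceil}$ and $X^E$ denote $X^{\lceil\log_2(|E|+|V|)\rceil}$ (similarly $\{0,1\}^V$, $\{0,1\}^E$). Vertices are injectively enumerated by bitstrings in $\{0,1\}^V$ different from the all-zero string $\mathbf{0}$ (which means "undefined"). The first $|V|$ bitstrings of $\{0,1\}^E$ are reserved to enumerate the identity paths $\mathrm{id}_v$, $v\in V$, and the edges of $E$ are injectively enumerated by other bitstrings of $\{0,1\}^E$; remaining bitstrings are unassigned. The source function $\{0,1\}^E\to\{0,1\}^V$ sends the code of $\mathrm{id}_v$ to the code of $v$, the code of an edge to the code of its source vertex, and any unassigned code to $\mathbf{0}$; the target function is analogous with target vertices. $S_G,T_G:X^E\to X^V$ are circuits implementing the source and target functions. $\mathtt{MATCH}_{X^V}:X^V\otimes X^V\to X$ is a circuit implementing the function $(x,y)\mapsto 1$ if $x=y$ and $x,y\neq\mathbf{0}$, and $0$ otherwise. $\mathcal{F}(G)$ is the free category on the graph $G$: objects are vertices, morphisms are finite paths of edges, identities are the empty paths. *)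

theory Defs
  imports Main "Graph_Theory.Digraph" "Graph_Theory.Arc_Walk"
begin

text \<open>Objects X^n are identified with n :: nat. Morphisms are represented by
well-formed circuit terms (representatives of morphisms of the free SMC).\<close>

datatype gate = NAND | COPY | TOP | BOT

fun gate_in :: "gate \<Rightarrow> nat" where
  "gate_in NAND = 2" | "gate_in COPY = 1" | "gate_in TOP = 0" | "gate_in BOT = 0"

fun gate_out :: "gate \<Rightarrow> nat" where
  "gate_out NAND = 1" | "gate_out COPY = 2" | "gate_out TOP = 1" | "gate_out BOT = 1"

fun gate_fun :: "gate \<Rightarrow> bool list \<Rightarrow> bool list" where
  "gate_fun NAND xs = [\<not> (xs ! 0 \<and> xs ! 1)]"
| "gate_fun COPY xs = [xs ! 0, xs ! 0]"
| "gate_fun TOP xs = [True]"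
| "gate_fun BOT xs = [False]"

datatype circ =
    Gate gate
  | Id nat
  | Swap nat nat
  | Comp circ circ    \<comment> \<open>diagrammatic composition: Comp f g = f;g\<close>
  | Tens circ circ

fun cdom :: "circ \<Rightarrow> nat" where
  "cdom (Gate g) = gate_in g"
| "cdom (Id n) = n"
| "cdom (Swap m n) = m + n"
| "cdom (Comp f g) = cdom f"
| "cdom (Tens f g) = cdom f + cdom g"

fun ccod :: "circ \<Rightarrow> nat" where
  "ccod (Gate g) = gate_out g"
| "ccod (Id n) = n"
| "ccod (Swap m n) = n + m"
| "ccod (Comp f g) = ccod g"
| "ccod (Tens f g) = ccod f + ccod g"

fun cwf :: "circ \<Rightarrow> bool" where
  "cwf (Gate g) = True"
| "cwf (Id n) = True"
| "cwf (Swap m n) = True"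
| "cwf (Comp f g) = (cwf f \<and> cwf g \<and> ccod f = cdom g)"
| "cwf (Tens f g) = (cwf f \<and> cwf g)"

definition typed :: "circ \<Rightarrow> nat \<Rightarrow> nat \<Rightarrow> bool" where
  "typed c m n \<longleftrightarrow> cwf c \<and> cdom c = m \<and> ccod c = n"

text \<open>The functor ext : Bcirc \<rightarrow> Bfun (meaningful on inputs of length cdom c).\<close>
fun ext :: "circ \<Rightarrow> bool list \<Rightarrow> bool list" where
  "ext (Gate g) xs = gate_fun g xs"
| "ext (Id n) xs = xs"
| "ext (Swap m n) xs = drop m xs @ take m xs"
| "ext (Comp f g) xs = ext g (ext f xs)"
| "ext (Tens f g) xs = ext f (take (cdom f) xs) @ ext g (drop (cdom f) xs)"

definition same_fun :: "circ \<Rightarrow> circ \<Rightarrow> bool" where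
  "same_fun f g \<longleftrightarrow> cdom f = cdom g \<and> ccod f = ccod g \<and>
     (\<forall>xs. length xs = cdom f \<longrightarrow> ext f xs = ext g xs)"

fun const_circ :: "bool list \<Rightarrow> circ" where
  "const_circ [] = Id 0"
| "const_circ (b # bs) = Tens (Gate (if b then TOP else BOT)) (const_circ bs)"

text \<open>1-cells A \<rightarrow> B: morphisms A \<otimes> X^n \<rightarrow> X \<otimes> B for some n.\<close>
definition bkp_hom :: "nat \<Rightarrow> nat \<Rightarrow> circ \<Rightarrow> bool" where
  "bkp_hom A B f \<longleftrightarrow> cwf f \<and> A \<le> cdom f \<and> ccod f = Suc B"

definition bkp_id :: "nat \<Rightarrow> circ" where
  "bkp_id A = Tens (Gate TOP) (Id A)"

text \<open>For f : A \<otimes> X^n0 \<rightarrow> X \<otimes> B and g : B \<otimes> X^n1 \<rightarrow> X \<otimes> C: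
  (f \<otimes> id_{X^n1}) ; (id_X \<otimes> g) ; (AND \<otimes> id_C).\<close>
definition bkp_comp :: "circ \<Rightarrow> nat \<Rightarrow> nat \<Rightarrow> nat \<Rightarrow> circ \<Rightarrow> circ \<Rightarrow> circ" where
  "bkp_comp AND A B C f g =
     Comp (Comp (Tens f (Id (cdom g - B))) (Tens (Id 1) g)) (Tens AND (Id C))"

text \<open>There is a (unique, necessarily invertible) 2-cell f \<Rightarrow> g between parallel
  1-cells iff they have the same extension.\<close>
definition bkp_2cell :: "circ \<Rightarrow> circ \<Rightarrow> bool" where
  "bkp_2cell f g \<longleftrightarrow> same_fun f g"

text \<open>Morphisms u \<rightarrow> v of F(G) are arc walks (u, p, v); identities are empty walks,
  composition is concatenation. F(G) is regarded as a locally discrete bicategory.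
  Since Bkp has at most one 2-cell between any two 1-cells, a pseudofunctor amounts to
  an object map P0, a map P1 on morphisms landing in the right hom-categories, and the
  existence of the (invertible) unit and composition 2-cells; all coherence and
  naturality axioms hold automatically.\<close>
definition pseudofunctor_FG ::
  "circ \<Rightarrow> ('v, 'e) pre_digraph \<Rightarrow> ('v \<Rightarrow> nat) \<Rightarrow> ('v \<Rightarrow> 'e list \<Rightarrow> 'v \<Rightarrow> circ) \<Rightarrow> bool" where
  "pseudofunctor_FG AND G P0 P1 \<longleftrightarrow>
     (\<forall>u p v. pre_digraph.awalk G u p v \<longrightarrow> bkp_hom (P0 u) (P0 v) (P1 u p v)) \<and>
     (\<forall>u\<in>verts G. bkp_2cell (bkp_id (P0 u)) (P1 u [] u) \<and> bkp_2cell (P1 u [] u) (bkp_id (P0 u))) \<and>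
     (\<forall>u p v q w. pre_digraph.awalk G u p v \<and> pre_digraph.awalk G v q w \<longrightarrow>
        bkp_2cell (bkp_comp AND (P0 u) (P0 v) (P0 w) (P1 u p v) (P1 v q w)) (P1 u (p @ q) w) \<and>
        bkp_2cell (P1 u (p @ q) w) (bkp_comp AND (P0 u) (P0 v) (P0 w) (P1 u p v) (P1 v q w)))"

definition clog2 :: "nat \<Rightarrow> nat" where
  "clog2 n = (LEAST k. n \<le> 2 ^ k)"

text \<open>Big-endian k-bit representation of a natural number; the "first N bitstrings"
  of {0,1}^k are those of 0, ..., N-1.\<close>
definition nat_bits :: "nat \<Rightarrow> nat \<Rightarrow> bool list" where
  "nat_bits k i = map (\<lambda>j. odd (i div 2 ^ (k - 1 - j))) [0..<k]"

definition bits :: "nat \<Rightarrow> bool list set" where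
  "bits k = {xs. length xs = k}"

definition src_fun ::
  "('v, 'e) pre_digraph \<Rightarrow> nat \<Rightarrow> ('v \<Rightarrow> bool list) \<Rightarrow> ('v \<Rightarrow> bool list) \<Rightarrow> ('e \<Rightarrow> bool list)
   \<Rightarrow> ('e \<Rightarrow> 'v) \<Rightarrow> bool list \<Rightarrow> bool list" where
  "src_fun G kV vcode idcode ecode endp x =
     (if \<exists>v\<in>verts G. idcode v = x then vcode (THE v. v \<in> verts G \<and> idcode v = x)
      else if \<exists>e\<in>arcs G. ecode e = x then vcode (endp (THE e. e \<in> arcs G \<and> ecode e = x))
      else replicate kV False)"

end

theory Submission
  imports Defs
begin

lemma ext_length:
  "cwf c \<Longrightarrow> length xs = cdom c \<Longrightarrow> length (ext c xs) = ccod c"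
proof (induction c arbitrary: xs)
  case (Gate g) then show ?case by (cases g) auto
qed auto

lemma const_circ_props:
  "cwf (const_circ bs) \<and> cdom (const_circ bs) = 0 \<and> ccod (const_circ bs) = length bs
   \<and> ext (const_circ bs) [] = bs"
  by (induction bs) auto

lemma bkp_comp_sem:
  assumes f: "typed f k (Suc k)" and g: "typed g k (Suc k)"
    and A: "typed AND 2 1" "\<forall>a b. ext AND [a, b] = [a \<and> b]"
  shows "typed (bkp_comp AND k k k f g) k (Suc k)"
    "length xs = k \<Longrightarrow> ext (bkp_comp AND k k k f g) xs =
       (hd (ext f xs) \<and> hd (ext g (tl (ext f xs)))) # tl (ext g (tl (ext f xs)))"
proof -
  show "typed (bkp_comp AND k k k f g) k (Suc k)"
    using f g A unfolding typed_def bkp_comp_def by auto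
  assume xs: "length xs = k"
  have lf: "length (ext f xs) = Suc k" using f xs ext_length unfolding typed_def by metis
  then obtain a y where fy: "ext f xs = a # y" and ly: "length y = k"
    by (cases "ext f xs") auto
  have lg: "length (ext g y) = Suc k" using g ly ext_length unfolding typed_def by metis
  then obtain b z where gz: "ext g y = b # z" and lz: "length z = k"
    by (cases "ext g y") auto
  show "ext (bkp_comp AND k k k f g) xs =
       (hd (ext f xs) \<and> hd (ext g (tl (ext f xs)))) # tl (ext g (tl (ext f xs)))"
    using f g A xs fy gz unfolding typed_def bkp_comp_def by simp
qed

fun pc :: "circ \<Rightarrow> nat \<Rightarrow> ('e \<Rightarrow> circ) \<Rightarrow> 'e list \<Rightarrow> circ" where
  "pc AND k E [] = bkp_id k"
| "pc AND k E [e] = E e"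
| "pc AND k E (e # e' # p) = bkp_comp AND k k k (E e) (pc AND k E (e' # p))"

theorem theorem10:
  fixes G :: "('v, 'e) pre_digraph"
    and kV kE :: nat
    and vcode idcode :: "'v \<Rightarrow> bool list"
    and ecode :: "'e \<Rightarrow> bool list"
    and S T MATCH AND COPYE :: circ
  assumes "fin_digraph G"
    and kV_def: "kV = clog2 (card (verts G) + 1)"
    and kE_def: "kE = clog2 (card (arcs G) + card (verts G))"
    and vcode: "inj_on vcode (verts G)" "vcode ` verts G \<subseteq> bits kV - {replicate kV False}"
    and idcode: "bij_betw idcode (verts G) (nat_bits kE ` {..<card (verts G)})"
    and ecode: "inj_on ecode (arcs G)"
       "ecode ` arcs G \<subseteq> bits kE - nat_bits kE ` {..<card (verts G)}"
    and S: "typed S kE kV"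
       "\<forall>xs. length xs = kE \<longrightarrow> ext S xs = src_fun G kV vcode idcode ecode (tail G) xs"
    and T: "typed T kE kV"
       "\<forall>xs. length xs = kE \<longrightarrow> ext T xs = src_fun G kV vcode idcode ecode (head G) xs"
    and MATCH: "typed MATCH (2 * kV) 1"
       "\<forall>xs. length xs = 2 * kV \<longrightarrow>
          ext MATCH xs = [take kV xs = drop kV xs \<and> take kV xs \<noteq> replicate kV False]"
    and AND: "typed AND 2 1" "\<forall>a b. ext AND [a, b] = [a \<and> b]"
    and COPYE: "typed COPYE kE (2 * kE)" "\<forall>xs. length xs = kE \<longrightarrow> ext COPYE xs = xs @ xs"
  shows "\<exists>P1. pseudofunctor_FG AND G (\<lambda>_. kV) P1 \<and>
    (\<forall>e\<in>arcs G. P1 (tail G e) [e] (head G e) =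
       Comp (Comp (Comp (Tens (Id kV) (const_circ (ecode e)))
                        (Tens (Id kV) COPYE))
                  (Tens (Id kV) (Tens S T)))
            (Tens MATCH (Id kV)))"
proof -
  interpret fin_digraph G by fact
  define E where "E e = Comp (Comp (Comp (Tens (Id kV) (const_circ (ecode e)))
                        (Tens (Id kV) COPYE))
                  (Tens (Id kV) (Tens S T)))
            (Tens MATCH (Id kV))" for e
  have vlen: "length (vcode v) = kV" "vcode v \<noteq> replicate kV False" if "v \<in> verts G" for v
    using vcode(2) that unfolding bits_def by auto
  have srcE: "src_fun G kV vcode idcode ecode endp (ecode e) = vcode (endp e)"
    if "e \<in> arcs G" for e endp
  proof -
    have "\<not> (\<exists>v\<in>verts G. idcode v = ecode e)"
      using idcode ecode(2) that unfolding bij_betw_def by blast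
    moreover have "(THE e'. e' \<in> arcs G \<and> ecode e' = ecode e) = e"
      using ecode(1) that by (auto dest: inj_onD)
    ultimately show ?thesis using that unfolding src_fun_def by auto
  qed
  have Etyp: "typed (E e) kV (Suc kV)" if e: "e \<in> arcs G" for e
  proof -
    have le: "length (ecode e) = kE" using ecode(2) e unfolding bits_def by auto
    show ?thesis
      using S T MATCH COPYE const_circ_props[of "ecode e"] le unfolding typed_def E_def by auto
  qed
  have Esem: "ext (E e) xs = (xs = vcode (tail G e)) # vcode (head G e)"
    if e: "e \<in> arcs G" and xs: "length xs = kV" for e xs
  proof -
    have le: "length (ecode e) = kE" using ecode(2) e unfolding bits_def by auto
    have c: "ext (const_circ (ecode e)) [] = ecode e" "cdom (const_circ (ecode e)) = 0"
      using const_circ_props by auto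
    have s: "ext S (ecode e) = vcode (tail G e)" "ext T (ecode e) = vcode (head G e)"
      using S(2) T(2) le srcE e by auto
    have ts: "cdom S = kE" "cdom MATCH = 2 * kV" using S MATCH unfolding typed_def by auto
    have "ext (E e) xs = ext (Tens MATCH (Id kV)) (xs @ vcode (tail G e) @ vcode (head G e))"
      unfolding E_def using xs c le COPYE(2) s ts by simp
    also have "\<dots> = ext MATCH (xs @ vcode (tail G e)) @ vcode (head G e)"
      using ts xs vlen e by simp
    also have "\<dots> = [(xs = vcode (tail G e))] @ vcode (head G e)"
      using MATCH(2) xs vlen[of "tail G e"] e by auto
    finally show ?thesis by simp
  qed
  define P where "P u p v = pc AND kV E p" for u :: 'v and p and v :: 'v
  have idtyp: "typed (bkp_id kV) kV (Suc kV)" unfolding typed_def bkp_id_def by simp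
  have idsem: "ext (bkp_id kV) xs = True # xs" if "length xs = kV" for xs
    using that unfolding bkp_id_def by simp
  have sem: "typed (pc AND kV E p) kV (Suc kV) \<and> (\<forall>xs. length xs = kV \<longrightarrow>
      ext (pc AND kV E p) xs = (p = [] \<or> xs = vcode u) # (if p = [] then xs else vcode v))"
    if "awalk u p v" for u p v
    using that
  proof (induction p arbitrary: u)
    case Nil
    then show ?case using idtyp idsem by (simp add: awalk_Nil_iff)
  next
    case (Cons e p)
    have e: "e \<in> arcs G" "u = tail G e" and w: "awalk (head G e) p v"
      using Cons.prems by (auto simp: awalk_Cons_iff)
    show ?case
    proof (cases p)
      case Nil
      then have "v = head G e" using w by (simp add: awalk_Nil_iff)
      then show ?thesis using Nil Etyp Esem e by simp
    next
      case (Cons e' p')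
      have IH: "typed (pc AND kV E p) kV (Suc kV)"
        "\<And>xs. length xs = kV \<Longrightarrow> ext (pc AND kV E p) xs = (xs = vcode (head G e)) # vcode v"
        using Cons.IH[OF w] Cons by auto
      have eq: "pc AND kV E (e # p) = bkp_comp AND kV kV kV (E e) (pc AND kV E p)"
        using Cons by simp
      have hv: "head G e \<in> verts G" using e by simp
      show ?thesis unfolding eq
        using bkp_comp_sem[OF Etyp[OF e(1)] IH(1) AND] Esem[OF e(1)] IH(2) vlen[OF hv] e(2)
        by auto
    qed
  qed
  have wf: "wf_digraph G" by unfold_locales
  have "pseudofunctor_FG AND G (\<lambda>_. kV) P"
      unfolding pseudofunctor_FG_def
    proof (intro conjI allI ballI impI)
      fix u p v assume "awalk u p v"
      then show "bkp_hom kV kV (P u p v)" using sem unfolding P_def bkp_hom_def typed_def by (metis order_refl)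
    next
      fix u assume "u \<in> verts G"
      show "bkp_2cell (bkp_id kV) (P u [] u)" "bkp_2cell (P u [] u) (bkp_id kV)"
        unfolding P_def bkp_2cell_def same_fun_def by auto
    next
      fix u p v q w assume a: "awalk u p v \<and> awalk v q w"
      then have pq: "awalk u (p @ q) w" using awalk_appendI by blast
      have uv: "u \<in> verts G" "v \<in> verts G" "w \<in> verts G" using a by auto
      note sp = sem[OF conjunct1[OF a]] and sq = sem[OF conjunct2[OF a]] and spq = sem[OF pq]
      have ty: "typed (bkp_comp AND kV kV kV (pc AND kV E p) (pc AND kV E q)) kV (Suc kV)"
        using bkp_comp_sem(1)[OF conjunct1[OF sp] conjunct1[OF sq] AND] .
      have "ext (bkp_comp AND kV kV kV (pc AND kV E p) (pc AND kV E q)) xs = ext (pc AND kV E (p @ q)) xs"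
        if xs: "length xs = kV" for xs
      proof -
        have 1: "u = v" if "p = []" using a that by (simp add: awalk_Nil_iff)
        have 2: "v = w" if "q = []" using a that by (simp add: awalk_Nil_iff)
        show ?thesis
          using bkp_comp_sem(2)[OF conjunct1[OF sp] conjunct1[OF sq] AND xs] sp sq spq xs vlen uv 1 2
          by auto
      qed
      then have "same_fun (bkp_comp AND kV kV kV (pc AND kV E p) (pc AND kV E q)) (pc AND kV E (p @ q))"
        using ty conjunct1[OF spq] unfolding same_fun_def typed_def by auto
      then show "bkp_2cell (bkp_comp AND kV kV kV (P u p v) (P v q w)) (P u (p @ q) w)"
        "bkp_2cell (P u (p @ q) w) (bkp_comp AND kV kV kV (P u p v) (P v q w))"
        unfolding P_def bkp_2cell_def same_fun_def by auto
    qed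
  then show ?thesis by (intro exI[of _ P]) (simp add: P_def E_def)
qed

end
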